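(* Assume that for Lebesgue-almost every irrational $\alpha\in(0,1)$ and every $c\in(0,1]$ one has $F_+^\alpha(c)=F_-^\alpha(c)$. Then for almost every $\alpha$, the function $c\mapsto F^\alpha(c):=\lim_{n\to\infty}S(\alpha,n,cn)^{1/cn}$ is continuous on $(0,1]$.
   Context: Every irrational $\alpha\in(0,1)$ has a unique continued fraction expansion $\alpha = 1/(a_1(\alpha)+1/(a_2(\alpha)+\cdots))$ with digits $a_i(\alpha)\in\mathbb{N}_{\ge1}$. For $1\le k\le n$ integers, \[ S(\alpha,n,k) := \binom{n}{k}^{-1}\sum_{1\le i_1<\cdots<i_k\le n} a_{i_1}(\alpha)\cdots a_{i_k}(\alpha), \] and $S(\alpha,n,cn)^{1/cn}$ means $S(\alpha,n,\lceil cn\rceil)^{1/\lceil cn\rceil}$. Define $F_+^\alpha(c)=\limsup_{n\to\infty}S(\alpha,n,cn)^{1/cn}$ and $F_-^\alpha(c)=\liminf_{n\to\infty}S(\alpha,n,cn)^{1/cn}$. *)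

theory Defs
  imports "HOL-Analysis.Analysis"
begin

definition gauss_map :: "real \<Rightarrow> real" where
  "gauss_map x = frac (1 / x)"

definition cf_digit :: "real \<Rightarrow> nat \<Rightarrow> nat" where
  "cf_digit \<alpha> i = nat \<lfloor>1 / (gauss_map ^^ (i - 1)) \<alpha>\<rfloor>"

definition S_mean :: "real \<Rightarrow> nat \<Rightarrow> nat \<Rightarrow> real" where
  "S_mean \<alpha> n k =
     (\<Sum>I\<in>{I. I \<subseteq> {1..n} \<and> card I = k}. \<Prod>i\<in>I. real (cf_digit \<alpha> i)) / real (n choose k)"

text \<open>S(alpha,n,cn)^{1/cn} with cn read as ceiling(c n).\<close>
definition S_root :: "real \<Rightarrow> real \<Rightarrow> nat \<Rightarrow> real" where
  "S_root \<alpha> c n = (let k = nat \<lceil>c * real n\<rceil> in S_mean \<alpha> n k powr (1 / real k))"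

definition F_plus :: "real \<Rightarrow> real \<Rightarrow> ereal" where
  "F_plus \<alpha> c = limsup (\<lambda>n. ereal (S_root \<alpha> c n))"

definition F_minus :: "real \<Rightarrow> real \<Rightarrow> ereal" where
  "F_minus \<alpha> c = liminf (\<lambda>n. ereal (S_root \<alpha> c n))"

definition F_lim :: "real \<Rightarrow> real \<Rightarrow> ereal" where
  "F_lim \<alpha> c = lim (\<lambda>n. ereal (S_root \<alpha> c n))"

end

theory Submission
  imports Defs
begin


definition XS :: "nat set \<Rightarrow> nat \<Rightarrow> nat set set" where
  "XS U k = {I. I \<subseteq> U \<and> card I = k}"

lemma XS_finite: "finite U \<Longrightarrow> finite (XS U k)"
  unfolding XS_def by (rule finite_subset[of _ "Pow U"]) auto

lemma XS_card: "finite U \<Longrightarrow> card (XS U k) = card U choose k"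
  unfolding XS_def by (rule n_subsets)

lemma count_super:
  assumes U: "finite U" and T: "T \<subseteq> U" and m: "card T \<le> m"
  shows "card {J \<in> XS U m. T \<subseteq> J} = (card U - card T) choose (m - card T)"
proof -
  have fT: "finite T" using U T finite_subset by blast
  have "bij_betw (\<lambda>J. J - T) {J \<in> XS U m. T \<subseteq> J} (XS (U - T) (m - card T))"
  proof (rule bij_betw_byWitness[where f' = "\<lambda>K. K \<union> T"])
    show "\<forall>a\<in>{J \<in> XS U m. T \<subseteq> J}. a - T \<union> T = a" by auto
    show "\<forall>a'\<in>XS (U - T) (m - card T). a' \<union> T - T = a'" unfolding XS_def by auto
    show "(\<lambda>J. J - T) ` {J \<in> XS U m. T \<subseteq> J} \<subseteq> XS (U - T) (m - card T)"
      unfolding XS_def using fT by (auto simp: card_Diff_subset)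
    show "(\<lambda>K. K \<union> T) ` XS (U - T) (m - card T) \<subseteq> {J \<in> XS U m. T \<subseteq> J}"
    proof safe
      fix K assume K: "K \<in> XS (U - T) (m - card T)"
      have "K \<subseteq> U" using K unfolding XS_def by auto
      then have fK: "finite K" using U finite_subset by blast
      have "K \<inter> T = {}" using K unfolding XS_def by auto
      then have "card (K \<union> T) = card K + card T" using fK fT card_Un_disjoint by blast
      then show "K \<union> T \<in> XS U m" using K m T unfolding XS_def by auto
    qed
  qed
  then have "card {J \<in> XS U m. T \<subseteq> J} = card (XS (U - T) (m - card T))"
    by (rule bij_betw_same_card)
  also have "\<dots> = (card U - card T) choose (m - card T)"
    using U fT T by (simp add: XS_card card_Diff_subset)
  finally show ?thesis .
qed

lemma sum_swap_sub:
  fixes f :: "nat set \<Rightarrow> real"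
  assumes U: "finite U" and km: "k \<le> m"
  shows "(\<Sum>J\<in>XS U m. \<Sum>I\<in>XS J k. f I) = (\<Sum>I\<in>XS U k. real ((card U - k) choose (m - k)) * f I)"
proof -
  have "(\<Sum>J\<in>XS U m. \<Sum>I\<in>XS J k. f I) = (\<Sum>J\<in>XS U m. \<Sum>I\<in>{I. I \<in> XS U k \<and> I \<subseteq> J}. f I)"
  proof (rule sum.cong)
    fix J assume "J \<in> XS U m"
    then have "XS J k = {I. I \<in> XS U k \<and> I \<subseteq> J}" by (auto simp: XS_def)
    then show "(\<Sum>I\<in>XS J k. f I) = (\<Sum>I\<in>{I. I \<in> XS U k \<and> I \<subseteq> J}. f I)" by simp
  qed simp
  also have "\<dots> = (\<Sum>I\<in>XS U k. \<Sum>J\<in>{J. J \<in> XS U m \<and> I \<subseteq> J}. f I)"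
    by (rule sum.swap_restrict) (auto intro: XS_finite U)
  also have "\<dots> = (\<Sum>I\<in>XS U k. real ((card U - k) choose (m - k)) * f I)"
  proof (rule sum.cong)
    fix I assume I: "I \<in> XS U k"
    have "card {J \<in> XS U m. I \<subseteq> J} = (card U - k) choose (m - k)"
      using count_super[OF U, of I m] I km unfolding XS_def by auto
    then show "(\<Sum>J\<in>{J. J \<in> XS U m \<and> I \<subseteq> J}. f I) = real ((card U - k) choose (m - k)) * f I"
      by simp
  qed simp
  finally show ?thesis .
qed

lemma prod_swap_sub:
  fixes a :: "nat \<Rightarrow> real"
  assumes J: "finite J" and k: "1 \<le> k" "k \<le> card J"
  shows "(\<Prod>I\<in>XS J k. \<Prod>i\<in>I. a i) = (\<Prod>i\<in>J. a i ^ ((card J - 1) choose (k - 1)))"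
proof -
  have "(\<Prod>I\<in>XS J k. \<Prod>i\<in>I. a i) = (\<Prod>I\<in>XS J k. \<Prod>i\<in>{i. i \<in> J \<and> i \<in> I}. a i)"
    by (rule prod.cong) (auto simp: XS_def intro!: prod.cong)
  also have "\<dots> = (\<Prod>i\<in>J. \<Prod>I\<in>{I. I \<in> XS J k \<and> i \<in> I}. a i)"
    by (rule prod.swap_restrict) (auto intro: XS_finite J)
  also have "\<dots> = (\<Prod>i\<in>J. a i ^ ((card J - 1) choose (k - 1)))"
  proof (rule prod.cong)
    fix i assume i: "i \<in> J"
    have "card {I \<in> XS J k. {i} \<subseteq> I} = (card J - card {i}) choose (k - card {i})"
      by (rule count_super[OF J]) (use i k in auto)
    moreover have "{I \<in> XS J k. {i} \<subseteq> I} = {I. I \<in> XS J k \<and> i \<in> I}" by auto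
    ultimately show "(\<Prod>I\<in>{I. I \<in> XS J k \<and> i \<in> I}. a i) = a i ^ ((card J - 1) choose (k - 1))"
      by simp
  qed simp
  finally show ?thesis .
qed



definition esym :: "(nat \<Rightarrow> real) \<Rightarrow> nat \<Rightarrow> nat \<Rightarrow> real" where
  "esym a n k = (\<Sum>I\<in>XS {1..n} k. \<Prod>i\<in>I. a i)"

definition Sm :: "(nat \<Rightarrow> real) \<Rightarrow> nat \<Rightarrow> nat \<Rightarrow> real" where
  "Sm a n k = esym a n k / real (n choose k)"

lemma prod_ge1': "(\<And>i. 1 \<le> a i) \<Longrightarrow> 1 \<le> (\<Prod>i\<in>I. (a i::real))"
  by (rule prod_ge_1) auto

lemma prod_subset_le:
  fixes a :: "nat \<Rightarrow> real"
  assumes a: "\<And>i. 1 \<le> a i" and J: "finite J" and IJ: "I \<subseteq> J"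
  shows "(\<Prod>i\<in>I. a i) \<le> (\<Prod>i\<in>J. a i)"
proof -
  have "(\<Prod>i\<in>J. a i) = (\<Prod>i\<in>J - I. a i) * (\<Prod>i\<in>I. a i)"
    using prod.subset_diff[OF IJ J] by simp
  moreover have "1 \<le> (\<Prod>i\<in>J - I. a i)" by (rule prod_ge1'[OF a])
  moreover have "1 \<le> (\<Prod>i\<in>I. a i)" by (rule prod_ge1'[OF a])
  ultimately show ?thesis by (metis mult_right_mono mult_1 less_le_trans zero_less_one less_imp_le)
qed

lemma esym_ge:
  assumes a: "\<And>i. 1 \<le> a i" and k: "k \<le> n"
  shows "real (n choose k) \<le> esym a n k"
proof -
  have "(\<Sum>I\<in>XS {1..n} k. (1::real)) \<le> esym a n k"
    unfolding esym_def by (rule sum_mono) (rule prod_ge1'[OF a])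
  then show ?thesis by (simp add: XS_card)
qed

lemma Sm_ge1:
  assumes a: "\<And>i. 1 \<le> a i" and k: "k \<le> n"
  shows "1 \<le> Sm a n k"
  using esym_ge[OF a k] zero_less_binomial[OF k] unfolding Sm_def by simp

lemma Sm_mono:
  assumes a: "\<And>i. 1 \<le> a i" and km: "k \<le> m" and mn: "m \<le> n"
  shows "Sm a n k \<le> Sm a n m"
proof -
  let ?U = "{1..n::nat}"
  have "(\<Sum>J\<in>XS ?U m. \<Sum>I\<in>XS J k. \<Prod>i\<in>I. a i) = (\<Sum>I\<in>XS ?U k. real ((n - k) choose (m - k)) * (\<Prod>i\<in>I. a i))"
    using sum_swap_sub[of ?U k m "\<lambda>I. \<Prod>i\<in>I. a i"] km by simp
  also have "\<dots> = real ((n - k) choose (m - k)) * esym a n k"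
    unfolding esym_def by (simp add: sum_distrib_left)
  finally have eq: "(\<Sum>J\<in>XS ?U m. \<Sum>I\<in>XS J k. \<Prod>i\<in>I. a i) = real ((n - k) choose (m - k)) * esym a n k" .
  have "(\<Sum>J\<in>XS ?U m. \<Sum>I\<in>XS J k. \<Prod>i\<in>I. a i) \<le> (\<Sum>J\<in>XS ?U m. real (m choose k) * (\<Prod>i\<in>J. a i))"
  proof (rule sum_mono)
    fix J assume J: "J \<in> XS ?U m"
    have fJ: "finite J" using J unfolding XS_def by (auto intro: finite_subset)
    have "(\<Sum>I\<in>XS J k. \<Prod>i\<in>I. a i) \<le> (\<Sum>I\<in>XS J k. \<Prod>i\<in>J. a i)"
      by (rule sum_mono, rule prod_subset_le[OF a fJ]) (auto simp: XS_def)
    also have "\<dots> = real (m choose k) * (\<Prod>i\<in>J. a i)"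
      using J fJ by (simp add: XS_card) (simp add: XS_def)
    finally show "(\<Sum>I\<in>XS J k. \<Prod>i\<in>I. a i) \<le> real (m choose k) * (\<Prod>i\<in>J. a i)" .
  qed
  also have "\<dots> = real (m choose k) * esym a n m"
    unfolding esym_def by (simp add: sum_distrib_left)
  finally have ineq: "real ((n - k) choose (m - k)) * esym a n k \<le> real (m choose k) * esym a n m"
    using eq by simp
  have cm: "real (n choose m) * real (m choose k) = real (n choose k) * real ((n - k) choose (m - k))"
    using choose_mult[OF km mn] by (metis of_nat_mult)
  have p1: "real (n choose k) > 0" "real (n choose m) > 0" "real ((n - k) choose (m - k)) > 0"
    using km mn by (auto simp: zero_less_binomial)
  have "esym a n k / real (n choose k) \<le> esym a n m / real (n choose m)"
  proof -
    have "esym a n k * real (n choose m) * real ((n - k) choose (m - k)) \<le> esym a n m * real (n choose k) * real ((n - k) choose (m - k))"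
    proof -
      have "esym a n k * real (n choose m) * real ((n - k) choose (m - k))
          = real (n choose m) * (real ((n - k) choose (m - k)) * esym a n k)" by simp
      also have "\<dots> \<le> real (n choose m) * (real (m choose k) * esym a n m)"
        using ineq p1 by (intro mult_left_mono) auto
      also have "\<dots> = esym a n m * (real (n choose m) * real (m choose k))" by simp
      also have "\<dots> = esym a n m * real (n choose k) * real ((n - k) choose (m - k))"
        using cm by simp
      finally show ?thesis .
    qed
    then have "esym a n k * real (n choose m) \<le> esym a n m * real (n choose k)"
      using p1 by (meson mult_le_cancel_right_pos)
    then show ?thesis using p1 by (simp add: divide_simps)
  qed
  then show ?thesis unfolding Sm_def .
qed



lemma Sm_upper:
  assumes a: "\<And>i. 1 \<le> a i" and k1: "1 \<le> k" and km: "k \<le> m" and mn: "m \<le> n"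
  shows "Sm a n m \<le> esym a n k powr (real m / real k - 1) * Sm a n k"
proof -
  let ?U = "{1..n::nat}"
  define P where "P I = (\<Prod>i\<in>I. a i)" for I
  define A where "A J = (\<Sum>I\<in>XS J k. P I) / real (m choose k)" for J
  define E where "E = esym a n k powr (real m / real k - 1)"
  have Ppos: "1 \<le> P I" for I unfolding P_def by (rule prod_ge1'[OF a])
  have ek: "esym a n k = (\<Sum>I\<in>XS ?U k. P I)" unfolding esym_def P_def ..
  have kn: "k \<le> n" using km mn by simp
  have ekpos: "1 \<le> esym a n k" using esym_ge[of a k n, OF a kn] zero_less_binomial[OF kn] by linarith
  have Cmk: "real (m choose k) > 0" using km by (simp add: zero_less_binomial)
  have key: "P J \<le> A J * E" if J: "J \<in> XS ?U m" for J
  proof -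
    have fJ: "finite J" and cJ: "card J = m" and JU: "J \<subseteq> ?U" using J unfolding XS_def by (auto intro: finite_subset)
    have S_fin: "finite (XS J k)" by (rule XS_finite[OF fJ])
    have S_card: "card (XS J k) = m choose k" using XS_card[OF fJ] cJ by simp
    have S_ne: "XS J k \<noteq> {}" using S_card km by (metis card.empty binomial_eq_0_iff not_less)
    have am: "(\<Sum>I\<in>XS J k. P I / real (card (XS J k))) \<ge> (\<Prod>I\<in>XS J k. P I) powr (1 / real (card (XS J k)))"
      by (rule arith_geom_mean[OF S_fin S_ne]) (use Ppos in \<open>auto intro: order_trans[OF zero_le_one]\<close>)
    have AJ: "A J = (\<Sum>I\<in>XS J k. P I / real (card (XS J k)))"
      unfolding A_def S_card by (simp add: sum_divide_distrib)
    have gm: "(\<Prod>I\<in>XS J k. P I) = P J ^ ((m - 1) choose (k - 1))"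
      using prod_swap_sub[OF fJ, of k a] k1 km cJ unfolding P_def by (simp add: prod_power_distrib)
    have PJpos: "0 < P J" using Ppos[of J] by linarith
    have ratio: "real ((m - 1) choose (k - 1)) / real (m choose k) = real k / real m"
    proof -
      have "k * (m choose k) = m * ((m - 1) choose (k - 1))" using times_binomial_minus1_eq k1 by simp
      then have "real k * real (m choose k) = real m * real ((m - 1) choose (k - 1))" by (metis of_nat_mult)
      then show ?thesis using Cmk k1 km by (simp add: divide_simps)
    qed
    have "(P J ^ ((m - 1) choose (k - 1))) powr (1 / real (m choose k)) = P J powr (real k / real m)"
      using PJpos ratio by (simp add: powr_realpow[symmetric] powr_powr)
    with am gm AJ S_card have h1: "P J powr (real k / real m) \<le> A J" by simp
    have "0 < P J powr (real k / real m)" using PJpos by simp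
    then have Apos: "0 < A J" using h1 by linarith
    have "P J = (P J powr (real k / real m)) powr (real m / real k)"
      using PJpos k1 km by (simp add: powr_powr)
    also have "\<dots> \<le> A J powr (real m / real k)"
      by (rule powr_mono2) (use h1 in auto)
    also have "\<dots> = A J * A J powr (real m / real k - 1)"
      using Apos by (simp add: powr_diff)
    also have "\<dots> \<le> A J * E"
    proof -
      have "A J \<le> esym a n k"
      proof -
        have "(\<Sum>I\<in>XS J k. P I) \<le> (\<Sum>I\<in>XS J k. esym a n k)"
        proof (rule sum_mono)
          fix I assume "I \<in> XS J k"
          then have "I \<in> XS ?U k" using JU unfolding XS_def by auto
          then show "P I \<le> esym a n k" unfolding ek
            by (rule member_le_sum) (use Ppos in \<open>auto intro: order_trans[OF zero_le_one] XS_finite\<close>)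
        qed
        then show ?thesis unfolding A_def S_card[symmetric] using S_card Cmk by (simp add: divide_simps mult.commute)
      qed
      moreover have "real m / real k - 1 \<ge> 0" using k1 km by (simp add: divide_simps)
      ultimately have "A J powr (real m / real k - 1) \<le> E"
        unfolding E_def using Apos by (intro powr_mono2) auto
      then show ?thesis using Apos by simp
    qed
    finally show ?thesis .
  qed
  have "esym a n m = (\<Sum>J\<in>XS ?U m. P J)" unfolding esym_def P_def ..
  also have "\<dots> \<le> (\<Sum>J\<in>XS ?U m. A J * E)" by (rule sum_mono) (rule key)
  also have "\<dots> = E * (\<Sum>J\<in>XS ?U m. \<Sum>I\<in>XS J k. P I) / real (m choose k)"
    unfolding A_def by (simp add: sum_distrib_left sum_divide_distrib mult.commute)
  also have "(\<Sum>J\<in>XS ?U m. \<Sum>I\<in>XS J k. P I) = real ((n - k) choose (m - k)) * esym a n k"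
    using sum_swap_sub[of ?U k m P] km unfolding ek by (simp add: sum_distrib_left)
  finally have em: "esym a n m \<le> E * (real ((n - k) choose (m - k)) * esym a n k) / real (m choose k)" .
  have cm: "real (n choose m) * real (m choose k) = real (n choose k) * real ((n - k) choose (m - k))"
    using choose_mult[OF km mn] by (metis of_nat_mult)
  have p1: "real (n choose k) > 0" "real (n choose m) > 0"
    using km mn by (auto simp: zero_less_binomial)
  have Epos: "0 \<le> E" unfolding E_def by simp
  have "Sm a n m = esym a n m / real (n choose m)" unfolding Sm_def ..
  also have "\<dots> \<le> E * (real ((n - k) choose (m - k)) * esym a n k) / (real (m choose k) * real (n choose m))"
    using em p1 Cmk by (simp add: divide_simps mult.commute mult.left_commute)
  also have "\<dots> = E * esym a n k / real (n choose k)"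
    using cm p1 Cmk by (simp add: divide_simps mult.commute mult.left_commute)
  also have "\<dots> = E * Sm a n k" unfolding Sm_def by simp
  finally show ?thesis unfolding E_def .
qed



lemma cont_lemma:
  fixes \<phi> :: "real \<Rightarrow> real" and L :: real
  assumes L: "0 \<le> L"
    and nn: "\<And>x. 0 < x \<Longrightarrow> x \<le> 1 \<Longrightarrow> 0 \<le> \<phi> x"
    and A: "\<And>x y. 0 < x \<Longrightarrow> x < y \<Longrightarrow> y \<le> 1 \<Longrightarrow> x * \<phi> x \<le> y * \<phi> y"
    and B: "\<And>x y. 0 < x \<Longrightarrow> x < y \<Longrightarrow> y \<le> 1 \<Longrightarrow> \<phi> y \<le> \<phi> x + (1/x - 1/y) * L"
  shows "continuous_on {0<..1} \<phi>"
  unfolding continuous_on_iff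
proof (intro ballI allI impI)
  fix c e :: real
  assume c: "c \<in> {0<..1}" and e: "0 < e"
  have c0: "0 < c" and c1: "c \<le> 1" using c by auto
  define K where "K = 2 * (L / c^2) + 2 * ((\<phi> c + L / c) / c)"
  have pc: "0 \<le> \<phi> c" using nn c0 c1 .
  have u0: "0 \<le> L / c^2" using L c0 by simp
  have v0: "\<phi> c / c \<le> (\<phi> c + L / c) / c" using L c0 by (simp add: divide_right_mono)
  have w0: "0 \<le> \<phi> c / c" using pc c0 by simp
  have K0: "0 \<le> K" unfolding K_def using u0 v0 w0 by linarith
  have bnd: "\<bar>\<phi> y - \<phi> c\<bar> \<le> K * \<bar>y - c\<bar>" if y: "c/2 < y" "y \<le> 1" for y
  proof (cases "c < y")
    case True
    have y0: "0 < y" using True c0 by simp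
    have b1: "\<phi> y \<le> \<phi> c + (1/c - 1/y) * L" using B[OF c0 True y(2)] .
    have "(1/c - 1/y) = (y - c) / (c*y)" using c0 y0 by (simp add: field_simps)
    also have "\<dots> \<le> (y - c) / c^2"
      using True c0 by (intro divide_left_mono) (auto simp: power2_eq_square intro: mult_left_mono)
    finally have d1: "1/c - 1/y \<le> (y - c) / c^2" .
    have up: "\<phi> y - \<phi> c \<le> (y - c) * (L / c^2)"
      using b1 mult_right_mono[OF d1 L] by (simp add: field_simps)
    have "1/c - 1/y \<le> 1/c" using y0 by simp
    then have pyb: "\<phi> y \<le> \<phi> c + L / c" using b1 mult_right_mono[of "1/c - 1/y" "1/c" L] L by simp
    have a1: "c * \<phi> c \<le> y * \<phi> y" using A[OF c0 True y(2)] .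
    have "c * (\<phi> c - \<phi> y) \<le> (y - c) * \<phi> y" using a1 by (simp add: algebra_simps)
    also have "\<dots> \<le> (y - c) * (\<phi> c + L / c)" using pyb True by (intro mult_left_mono) auto
    finally have "\<phi> c - \<phi> y \<le> (y - c) * (\<phi> c + L / c) / c" using c0 by (simp add: field_simps)
    then have lo: "\<phi> c - \<phi> y \<le> (y - c) * ((\<phi> c + L / c) / c)" by simp
    have k1: "L / c^2 \<le> K" and k2: "(\<phi> c + L / c) / c \<le> K" unfolding K_def using u0 v0 w0 by linarith+
    have "\<phi> y - \<phi> c \<le> K * (y - c)" using up mult_left_mono[OF k1, of "y - c"] True by (simp add: mult.commute)
    moreover have "\<phi> c - \<phi> y \<le> K * (y - c)" using lo mult_left_mono[OF k2, of "y - c"] True by (simp add: mult.commute)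
    ultimately show ?thesis using True by (simp add: abs_le_iff abs_if)
  next
    case False
    show ?thesis
    proof (cases "y = c")
      case True then show ?thesis by simp
    next
      case False2: False
      with False have yc: "y < c" by simp
      have y0: "0 < y" using y c0 by simp
      have b1: "\<phi> c \<le> \<phi> y + (1/y - 1/c) * L" using B[OF y0 yc c1] .
      have "(1/y - 1/c) = (c - y) / (y*c)" using c0 y0 by (simp add: field_simps)
      also have "\<dots> \<le> (c - y) / (c^2/2)"
      proof (rule divide_left_mono)
        show "c^2/2 \<le> y * c" using y c0 by (simp add: power2_eq_square)
      qed (use yc c0 y0 in auto)
      finally have d1: "1/y - 1/c \<le> (c - y) / (c^2/2)" .
      have "(1/y - 1/c) * L \<le> (c - y) / (c^2/2) * L" using mult_right_mono[OF d1 L] .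
      also have "\<dots> = (c - y) * (2 * L / c^2)" by (simp add: field_simps)
      finally have up: "\<phi> c - \<phi> y \<le> (c - y) * (2 * L / c^2)" using b1 by simp
      have a1: "y * \<phi> y \<le> c * \<phi> c" using A[OF y0 yc c1] .
      have "y * (\<phi> y - \<phi> c) \<le> (c - y) * \<phi> c" using a1 by (simp add: algebra_simps)
      then have "\<phi> y - \<phi> c \<le> (c - y) * \<phi> c / y" using y0 by (simp add: field_simps)
      also have "\<dots> \<le> (c - y) * \<phi> c / (c/2)"
        using y yc pc c0 by (intro divide_left_mono) auto
      finally have lo: "\<phi> y - \<phi> c \<le> (c - y) * (2 * \<phi> c / c)" by (simp add: mult_ac)
      have k1: "2 * L / c^2 \<le> K" and k2: "2 * \<phi> c / c \<le> K" unfolding K_def using u0 v0 w0 by linarith+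
      have "\<phi> c - \<phi> y \<le> K * (c - y)" using up mult_left_mono[OF k1, of "c - y"] yc by (simp add: mult.commute)
      moreover have "\<phi> y - \<phi> c \<le> K * (c - y)" using lo mult_left_mono[OF k2, of "c - y"] yc by (simp add: mult.commute)
      ultimately show ?thesis using yc by (simp add: abs_le_iff abs_if)
    qed
  qed
  define d where "d = min (c/2) (e / (K + 1))"
  have d0: "0 < d" unfolding d_def using c0 e K0 by simp
  show "\<exists>d>0. \<forall>x'\<in>{0<..1}. dist x' c < d \<longrightarrow> dist (\<phi> x') (\<phi> c) < e"
  proof (intro exI[of _ d] conjI ballI impI d0)
    fix y assume y: "y \<in> {0<..1}" and dy: "dist y c < d"
    have "\<bar>y - c\<bar> < c/2" "\<bar>y - c\<bar> < e / (K + 1)" using dy unfolding d_def dist_real_def by auto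
    then have yy: "c/2 < y" by linarith
    have "\<bar>\<phi> y - \<phi> c\<bar> \<le> K * \<bar>y - c\<bar>" using bnd yy y by auto
    also have "\<dots> \<le> K * (e / (K + 1))" using \<open>\<bar>y - c\<bar> < e / (K + 1)\<close> K0 by (intro mult_left_mono) auto
    also have "\<dots> < e" using K0 e by (simp add: field_simps)
    finally show "dist (\<phi> y) (\<phi> c) < e" unfolding dist_real_def .
  qed
qed



definition Sr :: "(nat \<Rightarrow> real) \<Rightarrow> real \<Rightarrow> nat \<Rightarrow> real" where
  "Sr a c n = (let k = nat \<lceil>c * real n\<rceil> in Sm a n k powr (1 / real k))"

lemma kk_bounds:
  assumes c: "0 < c" "c \<le> 1" and n: "1 \<le> n"
  shows "1 \<le> nat \<lceil>c * real n\<rceil>" "nat \<lceil>c * real n\<rceil> \<le> n"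
    "c * real n \<le> real (nat \<lceil>c * real n\<rceil>)" "real (nat \<lceil>c * real n\<rceil>) \<le> c * real n + 1"
proof -
  have p: "0 < c * real n" using c n by simp
  have q: "c * real n \<le> real n" using c n by simp
  show "1 \<le> nat \<lceil>c * real n\<rceil>" using p by linarith
  show "nat \<lceil>c * real n\<rceil> \<le> n" using q
    by (metis ceiling_mono ceiling_of_nat nat_int nat_mono)
  show "c * real n \<le> real (nat \<lceil>c * real n\<rceil>)" using p by linarith
  show "real (nat \<lceil>c * real n\<rceil>) \<le> c * real n + 1" using p by linarith
qed

lemma Sr_ge1:
  assumes a: "\<And>i. 1 \<le> a i" and c: "0 < c" "c \<le> 1" and n: "1 \<le> n"
  shows "1 \<le> Sr a c n"
  unfolding Sr_def Let_def
  by (rule ge_one_powr_ge_zero, rule Sm_ge1[OF a], rule kk_bounds[OF c n]) simp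

lemma fin_ineq:
  assumes a: "\<And>i. 1 \<le> a i" and c1: "0 < c1" and c12: "c1 \<le> c2" and c2: "c2 \<le> 1" and n: "1 \<le> n"
  shows "real (nat \<lceil>c1 * real n\<rceil>) * ln (Sr a c1 n) \<le> real (nat \<lceil>c2 * real n\<rceil>) * ln (Sr a c2 n)"
    "ln (Sr a c2 n) \<le> ln (Sr a c1 n) + (real n / real (nat \<lceil>c1 * real n\<rceil>) - real n / real (nat \<lceil>c2 * real n\<rceil>)) * ln 2"
proof -
  define k1 where "k1 = nat \<lceil>c1 * real n\<rceil>"
  define k2 where "k2 = nat \<lceil>c2 * real n\<rceil>"
  have c1': "c1 \<le> 1" and c2': "0 < c2" using c12 c1 c2 by auto
  have k1b: "1 \<le> k1" "k1 \<le> n" using kk_bounds[OF c1 c1' n] unfolding k1_def by auto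
  have k2b: "1 \<le> k2" "k2 \<le> n" using kk_bounds[OF c2' c2 n] unfolding k2_def by auto
  have k12: "k1 \<le> k2" unfolding k1_def k2_def using c12 n
    by (intro nat_mono ceiling_mono mult_right_mono) auto
  have S1: "1 \<le> Sm a n k1" using Sm_ge1[OF a k1b(2)] .
  have S2: "1 \<le> Sm a n k2" using Sm_ge1[OF a k2b(2)] .
  have l1: "ln (Sr a c1 n) = ln (Sm a n k1) / real k1" unfolding Sr_def Let_def k1_def[symmetric] by simp
  have l2: "ln (Sr a c2 n) = ln (Sm a n k2) / real k2" unfolding Sr_def Let_def k2_def[symmetric] by simp
  have r1: "real k1 > 0" "real k2 > 0" using k1b k2b by auto
  have mono: "Sm a n k1 \<le> Sm a n k2" by (rule Sm_mono[OF a k12 k2b(2)])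
  show "real (nat \<lceil>c1 * real n\<rceil>) * ln (Sr a c1 n) \<le> real (nat \<lceil>c2 * real n\<rceil>) * ln (Sr a c2 n)"
    unfolding k1_def[symmetric] k2_def[symmetric] l1 l2 using r1 mono S1 by simp
  define x1 where "x1 = ln (Sm a n k1)"
  define x2 where "x2 = ln (Sm a n k2)"
  define q where "q = ln (real (n choose k1))"
  define p where "p = real k2 / real k1 - 1"
  have p0: "0 \<le> p" unfolding p_def using k12 r1 by (simp add: divide_simps)
  have x10: "0 \<le> x1" unfolding x1_def using S1 by simp
  have Cpos: "0 < real (n choose k1)" using k1b by (simp add: zero_less_binomial)
  have q2: "q \<le> real n * ln 2"
  proof -
    have "real (n choose k1) \<le> 2 ^ n" by (metis binomial_le_pow2 of_nat_le_iff of_nat_numeral of_nat_power)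
    then have "q \<le> ln (2 ^ n)" unfolding q_def using Cpos by simp
    then show ?thesis by (simp add: ln_realpow)
  qed
  have e1: "esym a n k1 = real (n choose k1) * Sm a n k1" unfolding Sm_def using Cpos by simp
  have e1pos: "0 < esym a n k1" using e1 Cpos S1 by simp
  have up: "Sm a n k2 \<le> esym a n k1 powr p * Sm a n k1"
    unfolding p_def by (rule Sm_upper[OF a k1b(1) k12 k2b(2)])
  have "x2 \<le> ln (esym a n k1 powr p * Sm a n k1)" unfolding x2_def
    using up S2 e1pos S1 by (subst ln_le_cancel_iff) auto
  also have "\<dots> = p * (q + x1) + x1"
    using e1pos S1 Cpos by (simp add: ln_mult e1 q_def x1_def)
  finally have x2b: "x2 \<le> p * (real n * ln 2) + (p + 1) * x1"
    using q2 p0 mult_left_mono[OF q2 p0] by (simp add: algebra_simps)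
  have "x2 / real k2 \<le> (p * (real n * ln 2) + (p + 1) * x1) / real k2"
    using x2b r1 by (simp add: divide_right_mono)
  also have "\<dots> = x1 / real k1 + (real n / real k1 - real n / real k2) * ln 2"
    unfolding p_def using r1 by (simp add: field_simps)
  finally show "ln (Sr a c2 n) \<le> ln (Sr a c1 n) + (real n / real (nat \<lceil>c1 * real n\<rceil>) - real n / real (nat \<lceil>c2 * real n\<rceil>)) * ln 2"
    unfolding k1_def[symmetric] k2_def[symmetric] l1 l2 x1_def x2_def .
qed



lemma tt_lim:
  assumes c: "0 < c" "c \<le> 1"
  shows "(\<lambda>n. real (nat \<lceil>c * real n\<rceil>) / real n) \<longlonglongrightarrow> c"
proof (rule tendsto_sandwich[where f = "\<lambda>n. c" and h = "\<lambda>n. c + 1 / real n"])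
  show "\<forall>\<^sub>F n in sequentially. c \<le> real (nat \<lceil>c * real n\<rceil>) / real n"
    using eventually_ge_at_top[of "1::nat"]
  proof (rule eventually_mono)
    fix n :: nat assume n: "1 \<le> n"
    show "c \<le> real (nat \<lceil>c * real n\<rceil>) / real n" using kk_bounds(3)[OF c n] n by (simp add: field_simps)
  qed
  show "\<forall>\<^sub>F n in sequentially. real (nat \<lceil>c * real n\<rceil>) / real n \<le> c + 1 / real n"
    using eventually_ge_at_top[of "1::nat"]
  proof (rule eventually_mono)
    fix n :: nat assume n: "1 \<le> n"
    show "real (nat \<lceil>c * real n\<rceil>) / real n \<le> c + 1 / real n" using kk_bounds(4)[OF c n] n by (simp add: field_simps)
  qed
  show "(\<lambda>n. c) \<longlonglongrightarrow> c" by simp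
  show "(\<lambda>n. c + 1 / real n) \<longlonglongrightarrow> c" using tendsto_add[OF tendsto_const lim_1_over_n, of c] by simp
qed

lemma inv_tt_lim:
  assumes c: "0 < c" "c \<le> 1"
  shows "(\<lambda>n. real n / real (nat \<lceil>c * real n\<rceil>)) \<longlonglongrightarrow> 1 / c"
proof -
  have "(\<lambda>n. inverse (real (nat \<lceil>c * real n\<rceil>) / real n)) \<longlonglongrightarrow> inverse c"
    by (rule tendsto_inverse[OF tt_lim[OF c]]) (use c in simp)
  then show ?thesis by (simp add: inverse_eq_divide)
qed

lemma main_det:
  fixes a :: "nat \<Rightarrow> real"
  assumes a: "\<And>i. 1 \<le> a i"
    and conv: "\<And>c. c \<in> {0<..1} \<Longrightarrow> \<exists>F. (\<lambda>n. ereal (Sr a c n)) \<longlonglongrightarrow> F"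
  shows "continuous_on {0<..1} (\<lambda>c. lim (\<lambda>n. ereal (Sr a c n)))"
proof -
  define lg where "lg c n = ln (Sr a c n)" for c n
  have evn: "\<forall>\<^sub>F n in sequentially. 1 \<le> (n::nat)" by (rule eventually_ge_at_top)
  have ge1: "\<forall>\<^sub>F n in sequentially. 1 \<le> Sr a c n" if "c \<in> {0<..1}" for c
    using evn by (rule eventually_mono) (use that in \<open>auto intro: Sr_ge1[OF a]\<close>)
  have Sr_exp: "\<forall>\<^sub>F n in sequentially. Sr a c n = exp (lg c n)" if "c \<in> {0<..1}" for c
    using ge1[OF that] by (rule eventually_mono) (simp add: lg_def)
  have l_nn: "\<forall>\<^sub>F n in sequentially. 0 \<le> lg c n" if "c \<in> {0<..1}" for c
    using ge1[OF that] by (rule eventually_mono) (simp add: lg_def)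
  have ineqA: "\<forall>\<^sub>F n in sequentially. real (nat \<lceil>c1 * real n\<rceil>) / real n * lg c1 n \<le> real (nat \<lceil>c2 * real n\<rceil>) / real n * lg c2 n"
    if "0 < c1" "c1 \<le> c2" "c2 \<le> 1" for c1 c2
    using evn proof (rule eventually_mono)
    fix n :: nat assume n: "1 \<le> n"
    have "real (nat \<lceil>c1 * real n\<rceil>) * lg c1 n \<le> real (nat \<lceil>c2 * real n\<rceil>) * lg c2 n"
      unfolding lg_def by (rule fin_ineq(1)[OF a that n])
    then show "real (nat \<lceil>c1 * real n\<rceil>) / real n * lg c1 n \<le> real (nat \<lceil>c2 * real n\<rceil>) / real n * lg c2 n"
      using n by (simp add: divide_right_mono)
  qed
  have ineqB: "\<forall>\<^sub>F n in sequentially. lg c2 n \<le> lg c1 n + (real n / real (nat \<lceil>c1 * real n\<rceil>) - real n / real (nat \<lceil>c2 * real n\<rceil>)) * ln 2"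
    if "0 < c1" "c1 \<le> c2" "c2 \<le> 1" for c1 c2
    using evn by (rule eventually_mono) (unfold lg_def, rule fin_ineq(2)[OF a that])
  show ?thesis
  proof (cases "\<exists>c0\<in>{0<..1}. filterlim (lg c0) at_top sequentially")
    case True
    then obtain c0 where c0: "c0 \<in> {0<..1}" and lim0: "filterlim (lg c0) at_top sequentially" by blast
    have all: "filterlim (lg c) at_top sequentially" if c: "c \<in> {0<..1}" for c
    proof -
      have c0p: "0 < c0" "c0 \<le> 1" and cp: "0 < c" "c \<le> 1" using c0 c by auto
      show ?thesis
    proof (cases "c0 \<le> c")
      case True
      have "filterlim (\<lambda>n. c0 * lg c0 n) at_top sequentially"
        by (rule filterlim_tendsto_pos_mult_at_top[OF tendsto_const _ lim0]) (use c0 in auto)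
      moreover have "\<forall>\<^sub>F n in sequentially. c0 * lg c0 n \<le> lg c n"
        using eventually_conj[OF eventually_conj[OF ineqA[of c0 c, OF c0p(1) True cp(2)] evn] eventually_conj[OF l_nn[OF c0] l_nn[OF c]]] 
      proof (rule eventually_mono)
        fix n :: nat
        assume h: "(real (nat \<lceil>c0 * real n\<rceil>) / real n * lg c0 n \<le> real (nat \<lceil>c * real n\<rceil>) / real n * lg c n \<and> 1 \<le> n)
          \<and> 0 \<le> lg c0 n \<and> 0 \<le> lg c n"
        have n: "1 \<le> n" using h by simp
        have t0: "c0 \<le> real (nat \<lceil>c0 * real n\<rceil>) / real n" using kk_bounds(3)[of c0 n] c0 n by (simp add: field_simps)
        have "nat \<lceil>c * real n\<rceil> \<le> n" using kk_bounds(2)[of c n] c n by simp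
        then have "real (nat \<lceil>c * real n\<rceil>) \<le> real n" by linarith
        then have t1: "real (nat \<lceil>c * real n\<rceil>) / real n \<le> 1" using n by (simp add: field_simps)
        have "c0 * lg c0 n \<le> real (nat \<lceil>c0 * real n\<rceil>) / real n * lg c0 n"
          using t0 h by (intro mult_right_mono) auto
        also have "\<dots> \<le> real (nat \<lceil>c * real n\<rceil>) / real n * lg c n" using h by simp
        also have "\<dots> \<le> 1 * lg c n" using t1 h by (intro mult_right_mono) auto
        finally show "c0 * lg c0 n \<le> lg c n" by simp
      qed
      ultimately show ?thesis by (rule filterlim_at_top_mono)
    next
      case False
      have "filterlim (\<lambda>n. (- ln 2 / c) + lg c0 n) at_top sequentially"
        by (rule filterlim_tendsto_add_at_top[OF tendsto_const lim0])
      moreover have "c \<le> c0" using False by linarith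
      from eventually_conj[OF ineqB[of c c0, OF cp(1) this c0p(2)] evn]
      have "\<forall>\<^sub>F n in sequentially. (- ln 2 / c) + lg c0 n \<le> lg c n"
      proof (rule eventually_mono)
        fix n :: nat
        assume h: "lg c0 n \<le> lg c n + (real n / real (nat \<lceil>c * real n\<rceil>) - real n / real (nat \<lceil>c0 * real n\<rceil>)) * ln 2 \<and> 1 \<le> n"
        have n: "1 \<le> n" using h by simp
        have t: "real n / real (nat \<lceil>c * real n\<rceil>) \<le> 1 / c"
        proof -
          have "c * real n \<le> real (nat \<lceil>c * real n\<rceil>)" using kk_bounds(3)[of c n] c n by simp
          moreover have "0 < c * real n" using c n by simp
          ultimately show ?thesis using c by (simp add: field_simps)
        qed
        have "0 \<le> real n / real (nat \<lceil>c0 * real n\<rceil>)" by simp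
        then have "real n / real (nat \<lceil>c * real n\<rceil>) - real n / real (nat \<lceil>c0 * real n\<rceil>) \<le> 1 / c"
          using t by (smt (verit))
        then have "(real n / real (nat \<lceil>c * real n\<rceil>) - real n / real (nat \<lceil>c0 * real n\<rceil>)) * ln 2 \<le> 1 / c * ln 2"
          by (intro mult_right_mono) auto
        then show "(- ln 2 / c) + lg c0 n \<le> lg c n" using h by simp
      qed
      ultimately show ?thesis by (auto intro: filterlim_at_top_mono)
    qed
    qed
    have "lim (\<lambda>n. ereal (Sr a c n)) = \<infinity>" if c: "c \<in> {0<..1}" for c
    proof (rule limI)
      have "filterlim (\<lambda>n. exp (lg c n)) at_top sequentially"
        by (rule filterlim_compose[OF exp_at_top all[OF c]])
      then have "filterlim (\<lambda>n. Sr a c n) at_top sequentially"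
        by (rule filterlim_cong[OF refl refl Sr_exp[OF c], THEN iffD2])
      then show "(\<lambda>n. ereal (Sr a c n)) \<longlonglongrightarrow> \<infinity>" by (simp add: tendsto_PInfty_eq_at_top)
    qed
    note li = this
    have "continuous_on {0<..1::real} (\<lambda>c. \<infinity>::ereal)" by (rule continuous_on_const)
    then show ?thesis by (rule continuous_on_cong[THEN iffD1, OF refl, rotated]) (simp add: li)
  next
    case False
    have fin: "\<exists>f. lg c \<longlonglongrightarrow> ln f \<and> 1 \<le> f \<and> lim (\<lambda>n. ereal (Sr a c n)) = ereal f" if c: "c \<in> {0<..1}" for c
    proof -
      obtain F where F: "(\<lambda>n. ereal (Sr a c n)) \<longlonglongrightarrow> F" using conv[OF c] by blast
      have notinf: "F \<noteq> \<infinity>"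
      proof
        assume "F = \<infinity>"
        then have "filterlim (\<lambda>n. Sr a c n) at_top sequentially" using F by (simp add: tendsto_PInfty_eq_at_top)
        then have "filterlim (\<lambda>n. ln (Sr a c n)) at_top sequentially" by (rule filterlim_compose[OF ln_at_top])
        then show False using False c unfolding lg_def by auto
      qed
      have notminf: "F \<noteq> -\<infinity>"
      proof
        assume "F = -\<infinity>"
        then have "\<forall>\<^sub>F n in sequentially. ereal (Sr a c n) < ereal 0" using F by (simp add: tendsto_MInfty)
        then have "\<forall>\<^sub>F n in sequentially. False" using ge1[OF c] by (rule eventually_elim2) simp
        then show False by simp
      qed
      obtain f where Ff: "F = ereal f" using notinf notminf by (cases F) auto
      have fl: "(\<lambda>n. Sr a c n) \<longlonglongrightarrow> f" using F Ff by simp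
      have f1: "1 \<le> f" by (rule tendsto_lowerbound[OF fl ge1[OF c]]) simp
      have "(\<lambda>n. ln (Sr a c n)) \<longlonglongrightarrow> ln f" by (rule tendsto_ln[OF fl]) (use f1 in simp)
      moreover have "lim (\<lambda>n. ereal (Sr a c n)) = ereal f" using F Ff by (simp add: limI)
      ultimately show ?thesis using f1 unfolding lg_def by blast
    qed
    define \<phi> where "\<phi> c = ln (SOME f. lg c \<longlonglongrightarrow> ln f \<and> 1 \<le> f \<and> lim (\<lambda>n. ereal (Sr a c n)) = ereal f)" for c
    have phi: "lg c \<longlonglongrightarrow> \<phi> c \<and> 0 \<le> \<phi> c \<and> lim (\<lambda>n. ereal (Sr a c n)) = ereal (exp (\<phi> c))" if c: "c \<in> {0<..1}" for c
    proof -
      from someI_ex[OF fin[OF c]] show ?thesis unfolding \<phi>_def by auto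
    qed
    have cont: "continuous_on {0<..1} \<phi>"
    proof (rule cont_lemma[where L = "ln 2"])
      show "0 \<le> ln (2::real)" by simp
      show "0 \<le> \<phi> x" if "0 < x" "x \<le> 1" for x using phi[of x] that by auto
      show "x * \<phi> x \<le> y * \<phi> y" if h: "0 < x" "x < y" "y \<le> 1" for x y
      proof (rule tendsto_le[OF sequentially_bot _ _ ineqA[of x y]])
        show "(\<lambda>n. real (nat \<lceil>y * real n\<rceil>) / real n * lg y n) \<longlonglongrightarrow> y * \<phi> y"
          by (rule tendsto_mult[OF tt_lim]) (use phi[of y] h in auto)
        show "(\<lambda>n. real (nat \<lceil>x * real n\<rceil>) / real n * lg x n) \<longlonglongrightarrow> x * \<phi> x"
          by (rule tendsto_mult[OF tt_lim]) (use phi[of x] h in auto)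
      qed (use h in auto)
      show "\<phi> y \<le> \<phi> x + (1/x - 1/y) * ln 2" if h: "0 < x" "x < y" "y \<le> 1" for x y
      proof (rule tendsto_le[OF sequentially_bot _ _ ineqB[of x y]])
        show "(\<lambda>n. lg y n) \<longlonglongrightarrow> \<phi> y" using phi[of y] h by auto
        show "(\<lambda>n. lg x n + (real n / real (nat \<lceil>x * real n\<rceil>) - real n / real (nat \<lceil>y * real n\<rceil>)) * ln 2)
              \<longlonglongrightarrow> \<phi> x + (1/x - 1/y) * ln 2"
          by (intro tendsto_intros inv_tt_lim) (use phi[of x] h in auto)
      qed (use h in auto)
    qed
    have "continuous_on {0<..1} (\<lambda>c. ereal (exp (\<phi> c)))"
      by (intro continuous_on_ereal continuous_on_exp cont)
    moreover have "continuous_on {0<..1} (\<lambda>c. lim (\<lambda>n. ereal (Sr a c n))) = continuous_on {0<..1} (\<lambda>c. ereal (exp (\<phi> c)))"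
      using phi by (metis (no_types, lifting) continuous_on_cong)
    ultimately show ?thesis by simp
  qed
qed



lemma gauss_irr:
  assumes x: "x \<in> {0<..<1}" "x \<notin> \<rat>"
  shows "gauss_map x \<in> {0<..<1} \<and> gauss_map x \<notin> \<rat>"
proof -
  have ix: "1 / x \<notin> \<rat>"
  proof
    assume "1 / x \<in> \<rat>"
    then have "1 / (1 / x) \<in> \<rat>" by (rule Rats_divide[OF Rats_1])
    then show False using x by simp
  qed
  have g: "gauss_map x = 1 / x - of_int \<lfloor>1 / x\<rfloor>" unfolding gauss_map_def frac_def by simp
  have nq: "gauss_map x \<notin> \<rat>"
  proof
    assume "gauss_map x \<in> \<rat>"
    then have "gauss_map x + of_int \<lfloor>1 / x\<rfloor> \<in> \<rat>" by (intro Rats_add) auto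
    then show False using ix g by simp
  qed
  have "0 \<le> gauss_map x" "gauss_map x < 1" unfolding gauss_map_def by (auto simp: frac_lt_1)
  moreover have "gauss_map x \<noteq> 0" using nq by auto
  ultimately show ?thesis using nq by auto
qed

lemma iter_irr:
  assumes x: "x \<in> {0<..<1}" "x \<notin> \<rat>"
  shows "(gauss_map ^^ j) x \<in> {0<..<1} \<and> (gauss_map ^^ j) x \<notin> \<rat>"
  by (induction j) (use x gauss_irr in auto)

lemma digit_ge1:
  assumes x: "x \<in> {0<..<1}" "x \<notin> \<rat>"
  shows "1 \<le> real (cf_digit x i)"
proof -
  define y where "y = (gauss_map ^^ (i - 1)) x"
  have y: "0 < y" "y < 1" using iter_irr[OF x, of "i - 1"] unfolding y_def by auto
  have "1 < 1 / y" using y by simp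
  then have "1 \<le> \<lfloor>1 / y\<rfloor>" by linarith
  then show ?thesis unfolding cf_digit_def y_def[symmetric] by linarith
qed

lemma S_root_eq: "S_root \<alpha> c n = Sr (\<lambda>i. real (cf_digit \<alpha> i)) c n"
  unfolding S_root_def Sr_def S_mean_def Sm_def esym_def XS_def ..

theorem proposition3p5:
  assumes "AE \<alpha> in lborel. (\<alpha> \<in> {0<..<1} \<and> \<alpha> \<notin> \<rat>) \<longrightarrow>
             (\<forall>c\<in>{0<..1}. F_plus \<alpha> c = F_minus \<alpha> c)"
  shows "AE \<alpha> in lborel. (\<alpha> \<in> {0<..<1} \<and> \<alpha> \<notin> \<rat>) \<longrightarrow>
             continuous_on {0<..1} (F_lim \<alpha>)"
  using assms
proof (rule eventually_mono)
  fix \<alpha> :: real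
  assume h: "(\<alpha> \<in> {0<..<1} \<and> \<alpha> \<notin> \<rat>) \<longrightarrow> (\<forall>c\<in>{0<..1}. F_plus \<alpha> c = F_minus \<alpha> c)"
  show "(\<alpha> \<in> {0<..<1} \<and> \<alpha> \<notin> \<rat>) \<longrightarrow> continuous_on {0<..1} (F_lim \<alpha>)"
  proof
    assume a: "\<alpha> \<in> {0<..<1} \<and> \<alpha> \<notin> \<rat>"
    let ?a = "\<lambda>i. real (cf_digit \<alpha> i)"
    have conv: "\<exists>F. (\<lambda>n. ereal (Sr ?a c n)) \<longlonglongrightarrow> F" if c: "c \<in> {0<..1}" for c
    proof -
      have eq: "F_plus \<alpha> c = F_minus \<alpha> c" using h a c by blast
      have "(\<lambda>n. ereal (S_root \<alpha> c n)) \<longlonglongrightarrow> F_plus \<alpha> c"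
        by (rule Liminf_eq_Limsup) (use eq in \<open>auto simp: F_plus_def F_minus_def\<close>)
      then show ?thesis unfolding S_root_eq by blast
    qed
    have "continuous_on {0<..1} (\<lambda>c. lim (\<lambda>n. ereal (Sr ?a c n)))"
      by (rule main_det[OF _ conv]) (use a digit_ge1 in auto)
    moreover have "F_lim \<alpha> = (\<lambda>c. lim (\<lambda>n. ereal (Sr ?a c n)))"
      unfolding F_lim_def S_root_eq ..
    ultimately show "continuous_on {0<..1} (F_lim \<alpha>)" by simp
  qed
qed


end
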